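(* Let $P$ be a prime hyperideal of $R$ and let $I$ be a $P$-primary hyperideal of $R$ such that $(P^2:c)\subseteq I$ for every $c\in P\setminus I$. Then $I$ is a 1-absorbing prime hyperideal of $R$.
   Context: Throughout, $R$ is a commutative multiplicative hyperring ($(R,+)$ abelian group, $\circ$ a commutative associative hyperoperation into nonempty subsets with $a\circ(b+c)\subseteq a\circ b+a\circ c$, $a\circ(-b)=(-a)\circ b=-(a\circ b)$; $A\circ B=\bigcup_{a\in A,b\in B}a\circ b$), with identity $1$ ($a\in a\circ 1$); units are $x$ with $1\in x\circ y$ for some $y$. All hyperideals are $\mathbf{C}$-hyperideals (for any finite product $A=r_1\circ\cdots\circ r_n$, $A\cap I\neq\emptyset\Rightarrow A\subseteq I$). $\sqrt{I}=\{r: r^n\subseteq I\text{ for some }n\}$ (the intersection of prime hyperideals containing $I$). A primary hyperideal is a nonzero proper hyperideal $Q$ with $x\circ y\subseteq Q\Rightarrow x\in Q$ or $y\in\sqrt Q$; it is $P$-primary if $\sqrt Q=P$. $P^2=P\circ P$, and $(J:c)=\{r\in R: r\circ c\subseteq J\}$. A 1-absorbing prime hyperideal is a proper hyperideal $I$ such that for all nonunit $x,y,z$, $x\circ y\circ z\subseteq I$ implies $x\circ y\subseteq I$ or $z\in I$. *)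

theory Defs
  imports Main
begin

text \<open>A commutative multiplicative hyperring: the additive abelian group is the
type itself (class ab_group_add); the hyperoperation is m :: 'a => 'a => 'a set.\<close>

definition hmul :: "('a \<Rightarrow> 'a \<Rightarrow> 'a set) \<Rightarrow> 'a set \<Rightarrow> 'a set \<Rightarrow> 'a set" where
  "hmul m A B = (\<Union>a\<in>A. \<Union>b\<in>B. m a b)"

definition setplus :: "'a::ab_group_add set \<Rightarrow> 'a set \<Rightarrow> 'a set" where
  "setplus A B = {a + b | a b. a \<in> A \<and> b \<in> B}"

definition comm_mult_hyperring :: "('a::ab_group_add \<Rightarrow> 'a \<Rightarrow> 'a set) \<Rightarrow> bool" where
  "comm_mult_hyperring m \<longleftrightarrow>
     (\<forall>a b. m a b \<noteq> {}) \<and>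
     (\<forall>a b. m a b = m b a) \<and>
     (\<forall>a b c. hmul m (m a b) {c} = hmul m {a} (m b c)) \<and>
     (\<forall>a b c. m a (b + c) \<subseteq> setplus (m a b) (m a c)) \<and>
     (\<forall>a b. m a (- b) = uminus ` (m a b) \<and> m (- a) b = uminus ` (m a b))"

definition is_hyperring_identity :: "('a \<Rightarrow> 'a \<Rightarrow> 'a set) \<Rightarrow> 'a \<Rightarrow> bool" where
  "is_hyperring_identity m one \<longleftrightarrow> (\<forall>a. a \<in> m a one)"

definition hunit :: "('a \<Rightarrow> 'a \<Rightarrow> 'a set) \<Rightarrow> 'a \<Rightarrow> 'a \<Rightarrow> bool" where
  "hunit m one x \<longleftrightarrow> (\<exists>y. one \<in> m x y)"

fun hprod :: "('a \<Rightarrow> 'a \<Rightarrow> 'a set) \<Rightarrow> 'a list \<Rightarrow> 'a set" where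
  "hprod m [] = {}"
| "hprod m [r] = {r}"
| "hprod m (r # s # rs) = hmul m {r} (hprod m (s # rs))"

definition hpow :: "('a \<Rightarrow> 'a \<Rightarrow> 'a set) \<Rightarrow> 'a \<Rightarrow> nat \<Rightarrow> 'a set" where
  "hpow m r n = hprod m (replicate n r)"

definition hyperideal :: "('a::ab_group_add \<Rightarrow> 'a \<Rightarrow> 'a set) \<Rightarrow> 'a set \<Rightarrow> bool" where
  "hyperideal m I \<longleftrightarrow> I \<noteq> {} \<and> (\<forall>a\<in>I. \<forall>b\<in>I. a - b \<in> I) \<and>
     (\<forall>a\<in>I. \<forall>r. m r a \<subseteq> I)"

definition C_hyperideal :: "('a::ab_group_add \<Rightarrow> 'a \<Rightarrow> 'a set) \<Rightarrow> 'a set \<Rightarrow> bool" where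
  "C_hyperideal m I \<longleftrightarrow> hyperideal m I \<and>
     (\<forall>rs. rs \<noteq> [] \<longrightarrow> hprod m rs \<inter> I \<noteq> {} \<longrightarrow> hprod m rs \<subseteq> I)"

definition hrad :: "('a \<Rightarrow> 'a \<Rightarrow> 'a set) \<Rightarrow> 'a set \<Rightarrow> 'a set" where
  "hrad m I = {r. \<exists>n\<ge>1. hpow m r n \<subseteq> I}"

definition prime_hyperideal :: "('a::ab_group_add \<Rightarrow> 'a \<Rightarrow> 'a set) \<Rightarrow> 'a set \<Rightarrow> bool" where
  "prime_hyperideal m P \<longleftrightarrow> hyperideal m P \<and> P \<noteq> UNIV \<and>
     (\<forall>x y. m x y \<subseteq> P \<longrightarrow> x \<in> P \<or> y \<in> P)"

definition primary_hyperideal :: "('a::ab_group_add \<Rightarrow> 'a \<Rightarrow> 'a set) \<Rightarrow> 'a set \<Rightarrow> bool" where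
  "primary_hyperideal m Q \<longleftrightarrow> hyperideal m Q \<and> Q \<noteq> {0} \<and> Q \<noteq> UNIV \<and>
     (\<forall>x y. m x y \<subseteq> Q \<longrightarrow> x \<in> Q \<or> y \<in> hrad m Q)"

definition P_primary :: "('a::ab_group_add \<Rightarrow> 'a \<Rightarrow> 'a set) \<Rightarrow> 'a set \<Rightarrow> 'a set \<Rightarrow> bool" where
  "P_primary m P Q \<longleftrightarrow> primary_hyperideal m Q \<and> hrad m Q = P"

definition hcolon :: "('a \<Rightarrow> 'a \<Rightarrow> 'a set) \<Rightarrow> 'a set \<Rightarrow> 'a \<Rightarrow> 'a set" where
  "hcolon m J c = {r. m r c \<subseteq> J}"

definition one_absorbing_prime :: "('a::ab_group_add \<Rightarrow> 'a \<Rightarrow> 'a set) \<Rightarrow> 'a \<Rightarrow> 'a set \<Rightarrow> bool" where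
  "one_absorbing_prime m one I \<longleftrightarrow> hyperideal m I \<and> I \<noteq> UNIV \<and>
     (\<forall>x y z. \<not> hunit m one x \<longrightarrow> \<not> hunit m one y \<longrightarrow> \<not> hunit m one z \<longrightarrow>
        hmul m (m x y) {z} \<subseteq> I \<longrightarrow> m x y \<subseteq> I \<or> z \<in> I)"

end

theory Submission
  imports Defs
begin

theorem mainTheorem4:
  fixes m :: "'a::ab_group_add \<Rightarrow> 'a \<Rightarrow> 'a set" and one :: 'a
    and P I :: "'a set"
  assumes "comm_mult_hyperring m"
    and "is_hyperring_identity m one"
    and "\<forall>J. hyperideal m J \<longrightarrow> C_hyperideal m J"
    and "prime_hyperideal m P"
    and "P_primary m P I"
    and "\<forall>c \<in> P - I. hcolon m (hmul m P P) c \<subseteq> I"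
  shows "one_absorbing_prime m one I"
proof -
  have c0: "\<forall>a b. m a b = m b a" using assms(1)[unfolded comm_mult_hyperring_def] by (elim conjE) assumption
  have comm: "\<And>a b. m a b = m b a" using c0 by iprover
  have prP: "\<And>x y. m x y \<subseteq> P \<Longrightarrow> x \<in> P \<or> y \<in> P"
    using assms(4) unfolding prime_hyperideal_def by simp
  have rad: "hrad m I = P" using assms(5) unfolding P_primary_def by simp
  have PI: "primary_hyperideal m I" using assms(5) unfolding P_primary_def by simp
  have hI: "hyperideal m I" and nU: "I \<noteq> UNIV"
    using PI unfolding primary_hyperideal_def by simp_all
  have prim: "\<And>x y. m x y \<subseteq> I \<Longrightarrow> x \<in> I \<or> y \<in> P"
    using PI rad unfolding primary_hyperideal_def by simp
  have key: "m x y \<subseteq> I \<or> z \<in> I" if H: "hmul m (m x y) {z} \<subseteq> I" for x y z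
  proof (rule ccontr)
    assume "\<not> (m x y \<subseteq> I \<or> z \<in> I)"
    then obtain w where w: "w \<in> m x y" "w \<notin> I" and zI: "z \<notin> I" by blast
    have mw: "\<And>u. u \<in> m x y \<Longrightarrow> m u z \<subseteq> I" using H unfolding hmul_def by blast
    have zP: "z \<in> P" using prim[OF mw[OF w(1)]] w(2) by blast
    have wP: "w \<in> P"
    proof -
      have "m z w \<subseteq> I" using mw[OF w(1)] comm[of z w] by simp
      then show "w \<in> P" using prim zI by blast
    qed
    have "m w z \<subseteq> hmul m P P" using wP zP unfolding hmul_def by blast
    then have "w \<in> hcolon m (hmul m P P) z" unfolding hcolon_def by simp
    then have "w \<in> I" using assms(6) zP zI by blast
    then show False using w by blast
  qed
  show ?thesis unfolding one_absorbing_prime_def using hI nU key by simp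
qed

end
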